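(* Let $X$ be an infinite compact metrizable space and $h\colon X\to X$ a minimal homeomorphism. (1) If $F_1,F_2\subset X$ are closed and $V_1,V_2\subset X$ are open with $F_1\prec V_1$, $F_2\prec V_2$ and $V_1\cap V_2=\varnothing$, then $F_1\cup F_2\prec V_1\cup V_2$. (2) The union of finitely many thin sets in $X$ is thin.
   Context: For $F\subset X$ closed and $U\subset X$ open, write $F\prec U$ if there exist $M\in\mathbb{N}$, open sets $U_0,\dots,U_M\subset X$ and integers $d(0),\dots,d(M)$ such that $F\subset\bigcup_{j=0}^M U_j$, $h^{d(j)}(U_j)\subset U$ for all $j$, and the sets $h^{d(j)}(U_j)$ are pairwise disjoint. A closed set $F$ is thin if $F\prec U$ for every non-empty open $U\subset X$. *)

theory Defs
  imports "HOL-Analysis.Analysis"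
begin

definition hpow :: "('a \<Rightarrow> 'a) \<Rightarrow> int \<Rightarrow> 'a \<Rightarrow> 'a" where
  "hpow h d = (if d \<ge> 0 then h ^^ nat d else (inv h) ^^ nat (- d))"

definition minimal_homeo :: "('a::topological_space \<Rightarrow> 'a) \<Rightarrow> bool" where
  "minimal_homeo h \<longleftrightarrow> (\<exists>g. homeomorphism UNIV UNIV h g) \<and>
     (\<forall>E. closed E \<and> h ` E = E \<longrightarrow> E = {} \<or> E = UNIV)"

definition prec :: "('a::topological_space \<Rightarrow> 'a) \<Rightarrow> 'a set \<Rightarrow> 'a set \<Rightarrow> bool" where
  "prec h F U \<longleftrightarrow> (\<exists>(M::nat) (Us::nat \<Rightarrow> 'a set) (d::nat \<Rightarrow> int).
      (\<forall>j\<le>M. open (Us j)) \<and>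
      F \<subseteq> (\<Union>j\<le>M. Us j) \<and>
      (\<forall>j\<le>M. hpow h (d j) ` Us j \<subseteq> U) \<and>
      (\<forall>i\<le>M. \<forall>j\<le>M. i \<noteq> j \<longrightarrow> hpow h (d i) ` Us i \<inter> hpow h (d j) ` Us j = {}))"

definition thin :: "('a::topological_space \<Rightarrow> 'a) \<Rightarrow> 'a set \<Rightarrow> bool" where
  "thin h F \<longleftrightarrow> closed F \<and> (\<forall>U. open U \<and> U \<noteq> {} \<longrightarrow> prec h F U)"

end

theory Submission
  imports Defs
begin

lemma precE:
  assumes "prec h F U"
  obtains M :: nat and Us :: "nat \<Rightarrow> 'a::topological_space set" and d :: "nat \<Rightarrow> int"
  where "\<forall>j\<le>M. open (Us j)" "F \<subseteq> (\<Union>j\<le>M. Us j)"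
    "\<forall>j\<le>M. hpow h (d j) ` Us j \<subseteq> U"
    "\<forall>i\<le>M. \<forall>j\<le>M. i \<noteq> j \<longrightarrow> hpow h (d i) ` Us i \<inter> hpow h (d j) ` Us j = {}"
  using assms unfolding prec_def apply (elim exE conjE) apply (rule that) apply assumption+ done

lemma prec_union:
  assumes "prec h F1 V1" "prec h F2 V2" "V1 \<inter> V2 = {}"
  shows "prec h (F1 \<union> F2) (V1 \<union> V2)"
proof -
  obtain M1 :: nat and U1 d1 where A: "\<forall>j\<le>M1. open (U1 j)" "F1 \<subseteq> (\<Union>j\<le>M1. U1 j)"
    "\<forall>j\<le>M1. hpow h (d1 j) ` U1 j \<subseteq> V1"
    "\<forall>i\<le>M1. \<forall>j\<le>M1. i \<noteq> j \<longrightarrow> hpow h (d1 i) ` U1 i \<inter> hpow h (d1 j) ` U1 j = {}"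
    by (rule precE[OF assms(1)])
  obtain M2 :: nat and U2 d2 where B: "\<forall>j\<le>M2. open (U2 j)" "F2 \<subseteq> (\<Union>j\<le>M2. U2 j)"
    "\<forall>j\<le>M2. hpow h (d2 j) ` U2 j \<subseteq> V2"
    "\<forall>i\<le>M2. \<forall>j\<le>M2. i \<noteq> j \<longrightarrow> hpow h (d2 i) ` U2 i \<inter> hpow h (d2 j) ` U2 j = {}"
    by (rule precE[OF assms(2)])
  define U where "U j = (if j \<le> M1 then U1 j else U2 (j - Suc M1))" for j
  define d where "d j = (if j \<le> M1 then d1 j else d2 (j - Suc M1))" for j
  define M where "M = M1 + Suc M2"
  have im: "\<And>j. j \<le> M \<Longrightarrow> hpow h (d j) ` U j = (if j \<le> M1 then hpow h (d1 j) ` U1 j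
      else hpow h (d2 (j - Suc M1)) ` U2 (j - Suc M1))"
    by (simp add: U_def d_def)
  show ?thesis unfolding prec_def
  proof (intro exI[of _ M] exI[of _ U] exI[of _ d] conjI allI impI)
    fix j assume "j \<le> M" then show "open (U j)"
      using A(1) B(1) by (auto simp: U_def M_def)
  next
    show "F1 \<union> F2 \<subseteq> (\<Union>j\<le>M. U j)"
    proof
      fix x assume "x \<in> F1 \<union> F2"
      then show "x \<in> (\<Union>j\<le>M. U j)"
      proof
        assume "x \<in> F1" then obtain j where "j \<le> M1" "x \<in> U1 j" using A(2) by blast
        then show ?thesis by (auto simp: U_def M_def intro!: bexI[of _ j])
      next
        assume "x \<in> F2" then obtain j where "j \<le> M2" "x \<in> U2 j" using B(2) by blast
        then show ?thesis by (auto simp: U_def M_def intro!: bexI[of _ "j + Suc M1"])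
      qed
    qed
  next
    fix j assume j: "j \<le> M"
    show "hpow h (d j) ` U j \<subseteq> V1 \<union> V2"
    proof (cases "j \<le> M1")
      case True then show ?thesis using A(3) im[of j] j by auto
    next
      case False
      then have "j - Suc M1 \<le> M2" using j by (simp add: M_def)
      then show ?thesis using B(3) im[of j] j False by auto
    qed
  next
    fix i j assume ij: "i \<le> M" "j \<le> M" "i \<noteq> j"
    show "hpow h (d i) ` U i \<inter> hpow h (d j) ` U j = {}"
    proof -
      have Ii: "hpow h (d i) ` U i \<subseteq> (if i \<le> M1 then V1 else V2)"
        using A(3) B(3) ij(1) im[of i] by (auto simp: M_def)
      have Ij: "hpow h (d j) ` U j \<subseteq> (if j \<le> M1 then V1 else V2)"
        using A(3) B(3) ij(2) im[of j] by (auto simp: M_def)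
      show ?thesis
      proof (cases "i \<le> M1 \<longleftrightarrow> j \<le> M1")
        case False
        then show ?thesis using Ii Ij assms(3) by (auto split: if_splits)
      next
        case True
        show ?thesis
        proof (cases "i \<le> M1")
          case T: True
          then have "j \<le> M1" using True by simp
          then show ?thesis using A(4) ij T im[of i] im[of j] by simp
        next
          case F: False
          then have Fj: "\<not> j \<le> M1" using True by simp
          have "i - Suc M1 \<le> M2" "j - Suc M1 \<le> M2" "i - Suc M1 \<noteq> j - Suc M1"
            using ij F Fj by (auto simp: M_def)
          then show ?thesis using B(4) F Fj im[of i] im[of j] ij by simp
        qed
      qed
    qed
  qed
qed

lemma prec_mono:
  assumes "prec h F U" "U \<subseteq> W" shows "prec h F W"
  using assms(1) unfolding prec_def
  apply (elim exE conjE)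
  subgoal for M Us d
    apply (rule exI[of _ M], rule exI[of _ Us], rule exI[of _ d])
    apply (intro conjI)
       apply assumption
      apply assumption
     apply (intro allI impI)
     apply (rule subset_trans[OF _ assms(2)])
     apply simp
    apply assumption
    done
  done

lemma prec_empty: "prec h {} U"
  unfolding prec_def by (intro exI[of _ 0] exI[of _ "\<lambda>_. {}"]) auto

lemma open_iter:
  fixes h :: "'a::topological_space \<Rightarrow> 'a"
  assumes "homeomorphism UNIV UNIV h g" "open {y}"
  shows "open {(h ^^ n) y}"
proof (induction n)
  case 0 show ?case using assms(2) by (simp only: funpow_0)
next
  case (Suc n)
  have "openin (top_of_set UNIV) (h ` {(h ^^ n) y})"
    by (rule homeomorphism_imp_open_map[OF assms(1)]) (use Suc in simp)
  then show ?case by simp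
qed

lemma no_isolated:
  fixes h :: "'a::metric_space \<Rightarrow> 'a" and x :: 'a
  assumes "compact (UNIV :: 'a set)" "infinite (UNIV :: 'a set)" "minimal_homeo h"
  shows "\<not> open {x}"
proof
  assume ox: "open {x}"
  obtain g where hg: "homeomorphism UNIV UNIV h g" using assms(3) unfolding minimal_homeo_def by blast
  then have gh: "homeomorphism UNIV UNIV g h" by (rule homeomorphism_symD)
  have hgid: "h (g y) = y" "g (h y) = y" for y using hg unfolding homeomorphism_def by auto
  define Orb where "Orb = range (\<lambda>n. (h ^^ n) x) \<union> range (\<lambda>n. (g ^^ n) x)"
  have opO: "open {z}" if "z \<in> Orb" for z
    using that open_iter[OF hg ox] open_iter[OF gh ox] unfolding Orb_def by auto
  have "open Orb" proof -
    have "Orb = (\<Union>z\<in>Orb. {z})" by auto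
    then show ?thesis using opO by (metis open_UN)
  qed
  have hO: "h ` Orb = Orb"
  proof
    show "h ` Orb \<subseteq> Orb"
    proof
      fix z assume "z \<in> h ` Orb"
      then obtain w where w: "w \<in> Orb" "z = h w" by auto
      show "z \<in> Orb" using w(1) unfolding Orb_def
      proof
        assume "w \<in> range (\<lambda>n. (h ^^ n) x)"
        then obtain n where "w = (h ^^ n) x" by auto
        then have "z = (h ^^ Suc n) x" using w by simp
        then show "z \<in> range (\<lambda>n. (h ^^ n) x) \<union> range (\<lambda>n. (g ^^ n) x)" by blast
      next
        assume "w \<in> range (\<lambda>n. (g ^^ n) x)"
        then obtain n where n: "w = (g ^^ n) x" by auto
        show "z \<in> range (\<lambda>n. (h ^^ n) x) \<union> range (\<lambda>n. (g ^^ n) x)"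
        proof (cases n)
          case 0 then have "z = (h ^^ 1) x" using w n by simp
          then show ?thesis by blast
        next
          case (Suc m) then have "z = (g ^^ m) x" using w n hgid by simp
          then show ?thesis by blast
        qed
      qed
    qed
  next
    show "Orb \<subseteq> h ` Orb"
    proof
      fix z assume "z \<in> Orb"
      then show "z \<in> h ` Orb" unfolding Orb_def
      proof
        assume "z \<in> range (\<lambda>n. (h ^^ n) x)"
        then obtain n where n: "z = (h ^^ n) x" by auto
        show "z \<in> h ` (range (\<lambda>n. (h ^^ n) x) \<union> range (\<lambda>n. (g ^^ n) x))"
        proof (cases n)
          case 0 then have "z = h ((g ^^ 1) x)" using n hgid by simp
          then show ?thesis by blast
        next
          case (Suc m) then have "z = h ((h ^^ m) x)" using n by simp
          then show ?thesis by blast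
        qed
      next
        assume "z \<in> range (\<lambda>n. (g ^^ n) x)"
        then obtain n where n: "z = (g ^^ n) x" by auto
        then have "z = h ((g ^^ Suc n) x)" using hgid by simp
        then show "z \<in> h ` (range (\<lambda>n. (h ^^ n) x) \<union> range (\<lambda>n. (g ^^ n) x))" by blast
      qed
    qed
  qed
  have bij: "bij h" using hgid by (metis bijI' )
  have "h ` (- Orb) = - Orb" using hO bij by (metis bij_image_Compl_eq)
  moreover have "closed (- Orb)" using \<open>open Orb\<close> by auto
  ultimately have "- Orb = {} \<or> - Orb = UNIV" using assms(3) unfolding minimal_homeo_def by blast
  moreover have "x \<in> Orb" unfolding Orb_def by (auto intro: range_eqI[of _ _ 0])
  ultimately have "Orb = UNIV" by auto
  then have allop: "open {z}" for z :: 'a using opO by auto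
  obtain D :: "'a set set" where "D \<subseteq> (\<lambda>z::'a. {z}) ` UNIV" "finite D" "UNIV \<subseteq> \<Union>D"
  proof (rule compactE[OF assms(1), of "(\<lambda>z::'a. {z}) ` UNIV"])
    show "UNIV \<subseteq> \<Union> ((\<lambda>z::'a. {z}) ` UNIV)" by auto
    show "\<And>B. B \<in> (\<lambda>z::'a. {z}) ` UNIV \<Longrightarrow> open B" using allop by auto
  qed
  then have "finite (\<Union>D)" by auto
  then show False using \<open>UNIV \<subseteq> \<Union>D\<close> assms(2) by (metis finite_subset)
qed

lemma split_open:
  fixes U :: "'a::metric_space set" and h :: "'a \<Rightarrow> 'a"
  assumes "compact (UNIV :: 'a set)" "infinite (UNIV :: 'a set)" "minimal_homeo h"
    and "open U" "U \<noteq> {}"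
  obtains V1 V2 where "open V1" "open V2" "V1 \<noteq> {}" "V2 \<noteq> {}" "V1 \<inter> V2 = {}" "V1 \<subseteq> U" "V2 \<subseteq> U"
proof -
  obtain y where y: "y \<in> U" using assms(5) by auto
  have "\<exists>z\<in>U. z \<noteq> y"
  proof (rule ccontr)
    assume "\<not> ?thesis" then have "U = {y}" using y by blast
    then have "open {y}" using assms(4) by simp
    then show False using no_isolated[OF assms(1-3), of y] by simp
  qed
  then obtain z where z: "z \<in> U" "z \<noteq> y" by auto
  obtain A B where AB: "open A" "open B" "y \<in> A" "z \<in> B" "A \<inter> B = {}"
    using separation_t2[of y z] z(2) by metis
  show ?thesis
    by (rule that[of "A \<inter> U" "B \<inter> U"]) (use AB y z assms(4) in auto)
qed

theorem lemma3p7: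
  fixes h :: "'a::metric_space \<Rightarrow> 'a"
  assumes "compact (UNIV :: 'a set)"
    and "infinite (UNIV :: 'a set)"
    and "minimal_homeo h"
  shows "(\<forall>F1 F2 V1 V2. closed F1 \<and> closed F2 \<and> open V1 \<and> open V2 \<and>
            prec h F1 V1 \<and> prec h F2 V2 \<and> V1 \<inter> V2 = {}
            \<longrightarrow> prec h (F1 \<union> F2) (V1 \<union> V2))
       \<and> (\<forall>\<F>. finite \<F> \<and> (\<forall>F\<in>\<F>. thin h F) \<longrightarrow> thin h (\<Union>\<F>))"
proof (intro conjI allI impI)
  fix F1 F2 V1 V2 :: "'a set"
  assume "closed F1 \<and> closed F2 \<and> open V1 \<and> open V2 \<and>
            prec h F1 V1 \<and> prec h F2 V2 \<and> V1 \<inter> V2 = {}"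
  then show "prec h (F1 \<union> F2) (V1 \<union> V2)" using prec_union by blast
next
  have thin_un: "thin h (A \<union> B)" if "thin h A" "thin h B" for A B
    unfolding thin_def
  proof (intro conjI allI impI)
    show "closed (A \<union> B)" using that unfolding thin_def by auto
    fix U :: "'a set" assume U: "open U \<and> U \<noteq> {}"
    obtain V1 V2 where V: "open V1" "open V2" "V1 \<noteq> {}" "V2 \<noteq> {}" "V1 \<inter> V2 = {}" "V1 \<subseteq> U" "V2 \<subseteq> U"
      using split_open[OF assms] U by metis
    have "prec h (A \<union> B) (V1 \<union> V2)"
      using prec_union[of h A V1 B V2] that V unfolding thin_def by blast
    then show "prec h (A \<union> B) U" using prec_mono V by blast
  qed
  fix \<F> :: "'a set set"
  assume "finite \<F> \<and> (\<forall>F\<in>\<F>. thin h F)"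
  then have "finite \<F>" "\<forall>F\<in>\<F>. thin h F" by auto
  then show "thin h (\<Union>\<F>)"
  proof (induction \<F> rule: finite_induct)
    case empty then show ?case by (simp add: thin_def prec_empty)
  next
    case (insert F \<F>) then show ?case using thin_un by simp
  qed
qed

end
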